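(* Let $0\le\lambda<1$ and $0\le\beta\le2\lambda$. Then $C_\beta[f]\in\mathcal{S}^*$ for every $f\in\mathcal{S}^*(\lambda)$.
   Context: $\mathbb{D}$ is the open unit disk; $\mathcal{A}$ the class of analytic $f$ on $\mathbb{D}$ with $f(0)=0$, $f'(0)=1$. For $\lambda<1$, $\mathcal{S}^*(\lambda)=\{f\in\mathcal{A}: f(z)\ne0 \text{ for } z\ne0,\ \mathrm{Re}\,(zf'(z)/f(z))>\lambda \text{ on }\mathbb{D}\}$, and $\mathcal{S}^*=\mathcal{S}^*(0)$ is the class of normalized starlike univalent functions. For $\beta\ge0$ and $f$ analytic on $\mathbb{D}$ with $f(0)=0$, $C_\beta[f](z)=\int_0^z \frac{f(w)}{w(1-w)^\beta}\,dw$ (principal branch of $(1-w)^\beta$). *)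

theory Defs
  imports "HOL-Complex_Analysis.Complex_Analysis"
begin

definition classA :: "(complex \<Rightarrow> complex) set" where
  "classA = {f. f holomorphic_on ball 0 1 \<and> f 0 = 0 \<and> deriv f 0 = 1}"

definition starlike_order :: "real \<Rightarrow> (complex \<Rightarrow> complex) set" where
  "starlike_order lam = {f \<in> classA.
      (\<forall>z\<in>ball 0 1. z \<noteq> 0 \<longrightarrow> f z \<noteq> 0) \<and>
      (\<forall>z\<in>ball 0 1. z \<noteq> 0 \<longrightarrow> Re (z * deriv f z / f z) > lam)}"

definition starlike_class :: "(complex \<Rightarrow> complex) set" where
  "starlike_class = starlike_order 0"

text \<open>The integrand f(w) / (w (1-w)^beta), with the principal branch
  (1-w) powr beta = exp(beta Ln(1-w)); at w = 0 it is given its removable value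
  deriv f 0.\<close>
definition C_integrand :: "real \<Rightarrow> (complex \<Rightarrow> complex) \<Rightarrow> complex \<Rightarrow> complex" where
  "C_integrand \<beta> f w = (if w = 0 then deriv f 0 else f w / (w * (1 - w) powr (complex_of_real \<beta>)))"

definition C_op :: "real \<Rightarrow> (complex \<Rightarrow> complex) \<Rightarrow> complex \<Rightarrow> complex" where
  "C_op \<beta> f z = contour_integral (linepath 0 z) (C_integrand \<beta> f)"

end

theory Submission
  imports Defs
begin

lemma re_deriv:
  fixes g :: "complex \<Rightarrow> complex"
  assumes "(g has_field_derivative D) (at (of_real x))"
  shows "((\<lambda>t. Re (g (of_real t))) has_real_derivative Re D) (at x)"
proof -
  have "((\<lambda>t. g (of_real t)) has_vector_derivative D) (at x)"
    using has_vector_derivative_real_field[OF assms] .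
  from bounded_linear.has_vector_derivative[OF bounded_linear_Re this]
  show ?thesis by (simp add: has_real_derivative_iff_has_vector_derivative)
qed

lemma re_frac:
  fixes z :: complex assumes "norm z < 1"
  shows "Re (z / (1 - z)) > -1/2"
proof -
  define a where "a = Re z"
  define b where "b = Im z"
  have n: "a^2 + b^2 < 1" proof -
    have "(norm z)^2 < 1" using assms by (simp add: abs_square_less_1)
    then show ?thesis by (simp add: cmod_power2 a_def b_def)
  qed
  have "a^2 < 1" using n zero_le_power2[of b] by linarith
  then have "\<bar>a\<bar> < 1" by (simp add: abs_square_less_1)
  then have "(1 - a)^2 > 0" by simp
  then have d: "(1 - a)^2 + b^2 > 0" using zero_le_power2[of b] by linarith
  have "Re (z / (1 - z)) = (a * (1 - a) - b^2) / ((1 - a)^2 + b^2)"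
    by (simp add: Re_divide a_def b_def power2_eq_square algebra_simps)
  moreover have "(a * (1 - a) - b^2) / ((1 - a)^2 + b^2) > -1/2"
  proof -
    have "2*(a*(1-a)-b^2) + ((1-a)^2+b^2) = 1 - (a^2 + b^2)"
      by (simp add: algebra_simps power2_eq_square)
    then have h2: "2*(a*(1-a)-b^2) + ((1-a)^2+b^2) > 0" using n by linarith
    have gen: "\<And>X Y::real. X > 0 \<Longrightarrow> 2 * Y + X > 0 \<Longrightarrow> Y / X > -1/2"
      by (simp add: pos_less_divide_eq)
    show ?thesis by (rule gen[OF d h2])
  qed
  ultimately show ?thesis by simp
qed

lemma E_deriv:
  fixes w :: complex and \<beta> :: real assumes "norm w < 1"
  shows "((\<lambda>w. (1 - w) powr of_real \<beta>) has_field_derivative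
           (- of_real \<beta> * (1 - w) powr of_real \<beta> / (1 - w))) (at w)"
proof -
  have "Re (1 - w) > 0" using assms complex_Re_le_cmod[of w] by simp
  then have nr: "1 - w \<notin> \<real>\<^sub>\<le>\<^sub>0" by (auto simp: nonpos_Reals_def elim!: Reals_cases dest!: arg_cong[where f=Re])
  have ne: "1 - w \<noteq> 0" using assms by auto
  have "((\<lambda>w. (1 - w) powr of_real \<beta>) has_field_derivative
        (of_real \<beta> * (1 - w) powr (of_real \<beta> - 1) * (- 1))) (at w)"
  proof -
    have d: "((\<lambda>w. 1 - w) has_field_derivative -1) (at w)"
      by (auto intro!: derivative_eq_intros)
    show ?thesis using DERIV_chain2[OF has_field_derivative_powr[OF nr] d] by simp
  qed
  moreover have "(1 - w) powr (of_real \<beta> - 1) = (1 - w) powr of_real \<beta> / (1 - w)"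
    using ne by (simp add: powr_diff)
  ultimately show ?thesis by simp
qed
theorem theorem2p10:
  fixes lam \<beta> :: real and f :: "complex \<Rightarrow> complex"
  assumes "0 \<le> lam" and "lam < 1"
    and "0 \<le> \<beta>" and "\<beta> \<le> 2 * lam"
    and "f \<in> starlike_order lam"
  shows "C_op \<beta> f \<in> starlike_class"
proof -
  define B where "B = ball (0::complex) 1"
  have oB: "open B" and cB: "convex B" and zB: "0 \<in> B" by (auto simp: B_def)
  from assms(5) have fhol: "f holomorphic_on B" and f0: "f 0 = 0" and df0: "deriv f 0 = 1"
    and fnz: "\<And>z. z \<in> B \<Longrightarrow> z \<noteq> 0 \<Longrightarrow> f z \<noteq> 0"
    and fre: "\<And>z. z \<in> B \<Longrightarrow> z \<noteq> 0 \<Longrightarrow> Re (z * deriv f z / f z) > lam"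
    by (auto simp: starlike_order_def classA_def B_def)
  define E where "E = (\<lambda>w::complex. (1 - w) powr of_real \<beta>)"
  have Ed: "\<And>w. w \<in> B \<Longrightarrow> (E has_field_derivative (- of_real \<beta> * E w / (1 - w))) (at w)"
    using E_deriv by (simp add: E_def B_def)
  have Enz: "\<And>w. w \<in> B \<Longrightarrow> E w \<noteq> 0" by (auto simp: E_def B_def)
  have E0: "E 0 = 1" by (simp add: E_def)
  have Ehol: "E holomorphic_on B" using Ed oB by (auto simp: holomorphic_on_open)
  define h where "h = (\<lambda>z. if z = 0 then deriv f 0 else (f z - f 0) / (z - 0))"
  have hhol: "h holomorphic_on B" unfolding h_def
    by (rule pole_lemma[OF fhol]) (simp add: interior_open oB zB)
  define \<phi> where "\<phi> = C_integrand \<beta> f"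
  have phi_eq: "\<And>w. w \<in> B \<Longrightarrow> h w / E w = \<phi> w"
    by (auto simp: \<phi>_def C_integrand_def h_def E_def f0 df0)
  have phihol: "\<phi> holomorphic_on B"
    by (rule holomorphic_transform[OF holomorphic_on_divide[OF hhol Ehol Enz] phi_eq])
  have phinz: "\<And>w. w \<in> B \<Longrightarrow> \<phi> w \<noteq> 0"
    using fnz Enz by (auto simp: \<phi>_def C_integrand_def df0 E_def)
  have phi0: "\<phi> 0 = 1" by (simp add: \<phi>_def C_integrand_def df0)
  define F where "F = C_op \<beta> f"
  have Fd: "(F has_field_derivative \<phi> z) (at z)" if zin: "z \<in> B" for z
  proof -
    have contf: "continuous_on B \<phi>" using phihol holomorphic_on_imp_continuous_on by blast
    have a_cs: "\<And>x. x \<in> B \<Longrightarrow> closed_segment 0 x \<subseteq> B"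
      using cB zB by (simp add: closed_segment_subset)
    { fix x b c
      assume "x \<in> B" "closed_segment b c \<subseteq> B"
      then have abcs: "convex hull {0, b, c} \<subseteq> B"
      proof -
        have "b \<in> B" "c \<in> B" using \<open>closed_segment b c \<subseteq> B\<close> ends_in_segment by auto
        then show ?thesis using cB zB by (intro hull_minimal) auto
      qed
      then have "continuous_on (convex hull {0, b, c}) \<phi>"
        by (simp add: continuous_on_subset [OF contf])
      moreover have "\<And>x. x \<in> interior (convex hull {0, b, c}) - {} \<Longrightarrow> \<phi> field_differentiable at x"
        using abcs interior_subset phihol oB holomorphic_on_imp_differentiable_at by blast
      ultimately have "(\<phi> has_contour_integral 0) (linepath 0 b +++ linepath b c +++ linepath c 0)"
        by (intro Cauchy_theorem_triangle_cofinite[where S="{}"]) auto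
    } note 0 = this
    show ?thesis unfolding F_def C_op_def \<phi>_def[symmetric]
      using "0" zB a_cs contf has_chain_integral_chain_integral3 oB zin
        triangle_contour_integrals_starlike_primitive[of B \<phi> 0 z] by force
  qed
  have F0: "F 0 = 0" by (simp add: F_def C_op_def)
  have Fhol: "F holomorphic_on B" using Fd oB by (auto simp: holomorphic_on_open)
  have dF: "\<And>z. z\<in>B \<Longrightarrow> deriv F z = \<phi> z" using Fd DERIV_imp_deriv by blast
  define G where "G = (\<lambda>z. if z = 0 then deriv F 0 else (F z - F 0) / (z - 0))"
  have Ghol: "G holomorphic_on B" unfolding G_def
    by (rule pole_lemma[OF Fhol]) (simp add: interior_open oB zB)
  define q where "q = (\<lambda>z. G z / \<phi> z)"
  have qhol: "q holomorphic_on B" unfolding q_def using Ghol phihol phinz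
    by (rule holomorphic_on_divide)
  have qcont: "continuous_on B q" using qhol holomorphic_on_imp_continuous_on by blast
  have q0: "q 0 = 1" by (simp add: q_def G_def dF zB phi0)
  have Fq: "\<And>z. z\<in>B \<Longrightarrow> F z = z * \<phi> z * q z"
    using phinz by (auto simp: q_def G_def F0)
  have main: "\<forall>z\<in>B. Re (q z) > 0"
  proof (rule ccontr)
    assume "\<not> (\<forall>z\<in>B. Re (q z) > 0)"
    then obtain z1 where z1: "z1 \<in> B" "Re (q z1) \<le> 0" by auto
    define S where "S = cball 0 (norm z1) \<inter> (\<lambda>z. Re (q z)) -` {..0}"
    have cbB: "cball 0 (norm z1) \<subseteq> B" using z1 by (auto simp: B_def)
    have contRe: "continuous_on (cball 0 (norm z1)) (\<lambda>z. Re (q z))"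
      using continuous_on_subset[OF qcont cbB] by (intro continuous_intros)
    have "closed S" unfolding S_def by (rule continuous_closed_preimage[OF contRe]) auto
    moreover have "bounded S" unfolding S_def by (rule bounded_subset[OF bounded_cball]) auto
    ultimately have "compact S" by (simp add: compact_eq_bounded_closed)
    moreover have "z1 \<in> S" using z1 by (auto simp: S_def)
    ultimately obtain z0 where z0S: "z0 \<in> S" and z0min: "\<And>y. y \<in> S \<Longrightarrow> norm z0 \<le> norm y"
      using continuous_attains_inf[of S norm] continuous_on_norm_id by blast
    define r0 where "r0 = norm z0"
    have z0B: "z0 \<in> B" and z0re: "Re (q z0) \<le> 0" and r0le: "r0 \<le> norm z1"
      using z0S cbB by (auto simp: S_def r0_def)
    have z0nz: "z0 \<noteq> 0" using z0re q0 by auto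
    have r0pos: "r0 > 0" using z0nz by (simp add: r0_def)
    have pos: "Re (q z) > 0" if "norm z < r0" for z
    proof (rule ccontr)
      assume "\<not> Re (q z) > 0"
      then have "z \<in> S" using that r0le by (auto simp: S_def)
      then show False using z0min that by (fastforce simp: r0_def)
    qed
    have nonneg: "Re (q z) \<ge> 0" if "norm z \<le> r0" for z
    proof (rule ccontr)
      assume neg: "\<not> Re (q z) \<ge> 0"
      have zB': "z \<in> B" using that r0le z1 by (auto simp: B_def)
      have sub: "(\<lambda>t. of_real t * z) ` {0..1} \<subseteq> B"
      proof
        fix w assume "w \<in> (\<lambda>t. of_real t * z) ` {0..1}"
        then obtain t where "t \<in> {0..1}" "w = of_real t * z" by auto
        then have "norm w \<le> norm z" by (auto simp: norm_mult intro: mult_left_le_one_le)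
        then show "w \<in> B" using zB' by (auto simp: B_def)
      qed
      have cont: "continuous_on {0..1} (\<lambda>t. Re (q (of_real t * z)))"
        by (intro continuous_intros continuous_on_compose2[OF qcont _ sub]) 
      obtain t where t: "0 \<le> t" "t \<le> 1" "Re (q (of_real t * z)) = 0"
        using IVT2'[of "\<lambda>t. Re (q (of_real t * z))" 1 0 0] cont neg q0 by auto
      have "t \<noteq> 1" using t neg by auto
      then have "norm (of_real t * z) < r0" using t that r0pos
      proof -
        have "t * norm z \<le> t * r0" using t that by (intro mult_left_mono) auto
        moreover have "t * r0 < r0" using t \<open>t \<noteq> 1\<close> r0pos by simp
        ultimately show ?thesis using t by (simp add: norm_mult)
      qed
      then show False using pos t by fastforce
    qed
    have qz0: "Re (q z0) = 0" using z0re nonneg[of z0] by (simp add: r0_def)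
    define D where "D = deriv q z0"
    have qd: "\<And>w. (q has_field_derivative D) (at z0)" unfolding D_def
      using holomorphic_derivI[OF qhol oB z0B] .
    have rd: "((\<lambda>t. Re (q (of_real t * z0))) has_real_derivative Re (D * z0)) (at 1)"
    proof -
      have d1: "((\<lambda>t. t * z0) has_field_derivative z0) (at (of_real 1))"
        by (auto intro!: derivative_eq_intros)
      have "(q has_field_derivative D) (at ((\<lambda>t. t * z0) (of_real 1)))" using qd by simp
      from DERIV_chain2[OF this d1] show ?thesis
        using re_deriv[of "\<lambda>t. q (t * z0)" "D * z0" 1] by simp
    qed
    have ReDz: "Re (D * z0) \<le> 0"
    proof (rule ccontr)
      assume "\<not> Re (D * z0) \<le> 0"
      then obtain d where d: "d > 0" "\<And>h. h > 0 \<Longrightarrow> h < d \<Longrightarrow>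
          Re (q (of_real (1 - h) * z0)) < Re (q (of_real 1 * z0))"
        using DERIV_pos_inc_left[OF rd] by force
      define h where "h = min (d/2) (1/2)"
      have h: "h > 0" "h < d" "h < 1" using d by (auto simp: h_def)
      have "norm (of_real (1 - h) * z0) = (1 - h) * r0" using h
        by (simp add: norm_mult r0_def del: of_real_diff)
      then have "norm (of_real (1 - h) * z0) < r0" using h r0pos by simp
      then have "Re (q (of_real (1 - h) * z0)) > 0" by (rule pos)
      moreover have "Re (q (of_real (1 - h) * z0)) < 0" using d(2)[OF h(1,2)] qz0 by simp
      ultimately show False by simp
    qed
    have td: "((\<lambda>t. Re (q (exp (\<i> * of_real t) * z0))) has_real_derivative Re (D * (\<i> * z0))) (at 0)"
    proof -
      have d1: "((\<lambda>t. exp (\<i> * t) * z0) has_field_derivative (\<i> * z0)) (at (of_real 0))"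
        by (auto intro!: derivative_eq_intros)
      have "(q has_field_derivative D) (at ((\<lambda>t. exp (\<i> * t) * z0) (of_real 0)))" using qd by simp
      from DERIV_chain2[OF this d1] show ?thesis
        using re_deriv[of "\<lambda>t. q (exp (\<i> * t) * z0)" "D * (\<i> * z0)" 0] by simp
    qed
    have "Re (D * (\<i> * z0)) = 0"
    proof (rule DERIV_local_min[OF td, of 1])
      show "\<forall>y. \<bar>0 - y\<bar> < 1 \<longrightarrow> Re (q (exp (\<i> * of_real 0) * z0)) \<le> Re (q (exp (\<i> * of_real y) * z0))"
        using qz0 nonneg by (auto simp: norm_mult r0_def)
    qed simp
    then have ImDz: "Im (D * z0) = 0" by simp
    define \<psi> where "\<psi> = (\<lambda>z. f z / E z)"
    have Fpsi: "\<And>z. z \<in> B \<Longrightarrow> \<psi> z * q z = F z"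
      using Fq Enz by (auto simp: \<psi>_def \<phi>_def C_integrand_def f0 E_def)
    define f' where "f' = deriv f z0"
    have fd: "(f has_field_derivative f') (at z0)" unfolding f'_def
      using holomorphic_derivI[OF fhol oB z0B] .
    define E' where "E' = - of_real \<beta> * E z0 / (1 - z0)"
    define \<psi>' where "\<psi>' = (f' * E z0 - f z0 * E') / (E z0 * E z0)"
    have psid: "(\<psi> has_field_derivative \<psi>') (at z0)" unfolding \<psi>_def \<psi>'_def E'_def
      by (rule DERIV_divide[OF fd Ed[OF z0B] Enz[OF z0B]])
    have "((\<lambda>z. \<psi> z * q z) has_field_derivative (\<psi>' * q z0 + D * \<psi> z0)) (at z0)"
      by (rule DERIV_mult[OF psid qd])
    then have "(F has_field_derivative (\<psi>' * q z0 + D * \<psi> z0)) (at z0)"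
      by (rule has_field_derivative_transform_within_open[OF _ oB z0B Fpsi])
    then have phiz0: "\<phi> z0 = \<psi>' * q z0 + D * \<psi> z0"
      using Fd[OF z0B] DERIV_unique by blast
    have "z0 * \<phi> z0 = \<psi> z0" using z0nz by (simp add: \<phi>_def \<psi>_def C_integrand_def E_def)
    define a where "a = Re (D * z0)"
    have Dz: "D * z0 = of_real a" using ImDz by (simp add: a_def complex_eq_iff)
    define P where "P = z0 * f' / f z0 + of_real \<beta> * (z0 / (1 - z0))"
    have ne1: "1 - z0 \<noteq> 0" using z0B by (auto simp: B_def)
    have fz0: "f z0 \<noteq> 0" using fnz z0B z0nz by auto
    have key: "of_real (1 - a) = q z0 * P"
    proof -
      have "\<psi> z0 = z0 * \<psi>' * q z0 + (D * z0) * \<psi> z0"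
        using phiz0 \<open>z0 * \<phi> z0 = \<psi> z0\<close> by (simp add: algebra_simps)
      then have e1: "\<psi> z0 * (1 - of_real a) = (z0 * \<psi>') * q z0" using Dz by (simp add: algebra_simps)
      have e2: "z0 * \<psi>' = \<psi> z0 * P"
        using Enz[OF z0B] ne1 fz0
        by (simp add: \<psi>_def \<psi>'_def P_def E'_def field_simps)
      have nz: "\<psi> z0 \<noteq> 0" using Enz[OF z0B] fz0 by (simp add: \<psi>_def)
      have e3: "\<psi> z0 * (1 - of_real a) = \<psi> z0 * (q z0 * P)"
      proof -
        have "\<psi> z0 * (1 - of_real a) = (z0 * \<psi>') * q z0" by (rule e1)
        also have "\<dots> = (\<psi> z0 * P) * q z0" by (simp only: e2)
        also have "\<dots> = \<psi> z0 * (q z0 * P)" by (simp add: mult_ac)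
        finally show ?thesis .
      qed
      have "1 - of_real a = q z0 * P" using mult_left_cancel[OF nz] e3 by blast
      then show ?thesis by simp
    qed
    have ReP: "Re P > 0"
    proof -
      have "Re (z0 * f' / f z0) > lam" using fre[OF z0B z0nz] by (simp add: f'_def)
      moreover have "\<beta> * Re (z0 / (1 - z0)) \<ge> \<beta> * (-1/2)"
        using re_frac[of z0] z0B assms(3) by (intro mult_left_mono) (auto simp: B_def)
      moreover have "Re P = Re (z0 * f' / f z0) + \<beta> * Re (z0 / (1 - z0))"
      proof -
        have "\<And>y. Re (of_real \<beta> * y) = \<beta> * Re y" by simp
        then show ?thesis unfolding P_def by (simp only: plus_complex.sel)
      qed
      ultimately show ?thesis using assms(4) by linarith
    qed
    have "Im (q z0 * P) = Im (q z0) * Re P" using qz0 by simp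
    then have "Im (q z0) = 0" using key ReP by (metis Im_complex_of_real mult_eq_0_iff less_irrefl)
    then have "q z0 = 0" using qz0 by (simp add: complex_eq_iff)
    then show False using key ReDz by (simp add: a_def complex_eq_iff)
  qed
  have Fnz: "F z \<noteq> 0" if "z \<in> B" "z \<noteq> 0" for z
  proof -
    have "q z \<noteq> 0" using main that by (metis zero_complex.simps(1) less_irrefl)
    then show ?thesis using Fq phinz that by auto
  qed
  have Fre: "Re (z * deriv F z / F z) > 0" if "z \<in> B" "z \<noteq> 0" for z
  proof -
    have qz: "Re (q z) > 0" using main that by blast
    then have "q z \<noteq> 0" by (metis zero_complex.simps(1) less_irrefl)
    have "z * deriv F z / F z = inverse (q z)"
      using Fq[OF that(1)] dF[OF that(1)] phinz[OF that(1)] that(2) \<open>q z \<noteq> 0\<close>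
      by (simp add: field_simps)
    moreover have "Re (inverse (q z)) > 0" using qz \<open>q z \<noteq> 0\<close>
      by (simp add: Re_divide divide_pos_pos complex_neq_0 cmod_power2 power2_eq_square)
    ultimately show ?thesis by simp
  qed
  show ?thesis
    unfolding starlike_class_def starlike_order_def classA_def F_def[symmetric]
    using Fhol F0 dF[OF zB] phi0 Fnz Fre by (auto simp: B_def)
qed
end
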